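(* Let $N\in\mathbb N$ and let $z_1> \dots> z_N$ be the zeros of the classical Hermite polynomial $H_N$ (orthogonal with respect to the weight $e^{-x^2}$ on $\mathbb R$). Form the matrix $S=(s_{i,j})_{i,j=1,\dots,N}$ with $$s_{i,i}:=1+\sum_{l\ne i}(z_i-z_l)^{-2},\qquad s_{i,j}:=-(z_i-z_j)^{-2}\quad (i\ne j).$$ Then $\det S=N!$. *)

theory Defs
  imports "HOL-Computational_Algebra.Polynomial" "Jordan_Normal_Form.Determinant"
begin

fun hermite :: "nat \<Rightarrow> real poly" where
  "hermite 0 = 1"
| "hermite (Suc 0) = [:0, 2:]"
| "hermite (Suc (Suc n)) = [:0, 2:] * hermite (Suc n) - smult (2 * real (Suc n)) (hermite n)"

definition hermite_S :: "nat \<Rightarrow> (nat \<Rightarrow> real) \<Rightarrow> real mat" where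
  "hermite_S N z = mat N N (\<lambda>(i, j).
     if i = j then 1 + (\<Sum>l\<in>{..<N} - {i}. 1 / (z i - z l)^2)
     else - (1 / (z i - z j)^2))"

end

theory Submission
  imports Defs
begin

lemma hermite_deriv: "pderiv (hermite (Suc n)) = smult (2 * real (Suc n)) (hermite n)"
proof (induction n rule: less_induct)
  case (less n)
  show ?case
  proof (cases n)
    case 0 then show ?thesis by (simp add: pderiv_pCons)
  next
    case (Suc m)
    have IH1: "pderiv (hermite (Suc m)) = smult (2 * real (Suc m)) (hermite m)"
      using less Suc by simp
    have d2: "pderiv [:0, 2::real:] = [:2:]" by (simp add: pderiv_pCons)
    have "pderiv (hermite (Suc (Suc m))) = smult 2 (hermite (Suc m)) + [:0,2:] * smult (2 * real (Suc m)) (hermite m) - smult (2 * real (Suc m)) (pderiv (hermite m))"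
      unfolding hermite.simps(3) pderiv_diff pderiv_mult pderiv_smult IH1 d2
      by (rule poly_ext) (simp add: algebra_simps)
    also have "\<dots> = smult (2 * real (Suc (Suc m))) (hermite (Suc m))"
    proof (cases m)
      case 0 then show ?thesis by (intro poly_ext) (simp add: pderiv_pCons pderiv_smult algebra_simps)
    next
      case (Suc j)
      have IH2: "pderiv (hermite (Suc j)) = smult (2 * real (Suc j)) (hermite j)"
        using less \<open>n = Suc m\<close> Suc by simp
      show ?thesis using Suc IH2
        by (intro poly_ext) (simp add: algebra_simps)
    qed
    finally show ?thesis using Suc by simp
  qed
qed

lemma hermite_rec': "hermite (Suc n) = [:0,2:] * hermite n - pderiv (hermite n)"
proof (cases n)
  case 0 then show ?thesis by simp
next
  case (Suc m) then show ?thesis by (simp add: hermite_deriv)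
qed

lemma hermite_ode: "pderiv (pderiv (hermite n)) - [:0,2:] * pderiv (hermite n) + smult (2 * real n) (hermite n) = 0"
proof -
  have "pderiv (hermite (Suc n)) = smult 2 (hermite n) + [:0,2:] * pderiv (hermite n) - pderiv (pderiv (hermite n))"
    by (subst hermite_rec') (unfold pderiv_diff pderiv_mult, intro poly_ext, simp add: pderiv_pCons pderiv_smult algebra_simps)
  then have "smult (2 * real (Suc n)) (hermite n) = smult 2 (hermite n) + [:0,2:] * pderiv (hermite n) - pderiv (pderiv (hermite n))"
    by (simp add: hermite_deriv)
  then have "\<forall>x. poly (smult (2 * real (Suc n)) (hermite n)) x = poly (smult 2 (hermite n) + [:0,2:] * pderiv (hermite n) - pderiv (pderiv (hermite n))) x"
    by simp
  then show ?thesis by (intro poly_ext) (simp add: algebra_simps)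
qed

lemma hermite_degree_coeff: "degree (hermite n) = n \<and> coeff (hermite n) n = 2 ^ n"
proof (induction n rule: less_induct)
  case (less n)
  show ?case
  proof (cases n)
    case 0 then show ?thesis by simp
  next
    case (Suc m)
    note IH = less[of m, simplified Suc]
    have dx: "degree ([:0,2::real:] * hermite m) = Suc m" using IH
      by (subst degree_mult_eq) auto
    have cx: "coeff ([:0,2::real:] * hermite m) (Suc m) = 2 ^ Suc m" using IH
      by simp
    have dp: "degree (pderiv (hermite m)) < Suc m"
      using IH degree_pderiv[of "hermite m"] by simp
    have "degree (hermite (Suc m)) = Suc m"
      unfolding hermite_rec' using dx dp by (metis degree_add_eq_left degree_minus diff_conv_add_uminus)
    moreover have "coeff (hermite (Suc m)) (Suc m) = 2 ^ Suc m"
      unfolding hermite_rec' using cx dp by (simp add: coeff_eq_0)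
    ultimately show ?thesis using Suc by simp
  qed
qed


lemma key_sum:
  fixes N :: nat and z :: "nat \<Rightarrow> real"
  assumes roots: "\<forall>i<N. poly (hermite N) (z i) = 0"
    and decr: "\<forall>i j. i < j \<and> j < N \<longrightarrow> z j < z i"
    and i: "i < N"
  shows "(\<Sum>l\<in>{..<N} - {i}. 1 / (z i - z l)) = z i"
proof -
  have inj: "inj_on z {..<N}"
  proof (rule inj_onI)
    fix a b assume "a \<in> {..<N}" "b \<in> {..<N}" "z a = z b"
    then show "a = b" using decr by (metis lessThan_iff linorder_neqE_nat order_less_irrefl)
  qed
  define W where "W = (\<Prod>l\<in>{..<N}. [:- z l, 1:])"
  have degW: "degree W = N" unfolding W_def
    by (subst degree_prod_eq_sum_degree) auto
  have lcW: "coeff W N = 1"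
    using lead_coeff_prod[of "\<lambda>l. [:- z l, 1:]" "{..<N}"] degW unfolding W_def by simp
  have HW: "hermite N = smult (2 ^ N) W"
  proof (rule poly_eqI_degree_lead_coeff[where n=N and A="z ` {..<N}"])
    show "coeff (hermite N) N = coeff (smult (2 ^ N) W) N" using hermite_degree_coeff lcW by simp
    show "N \<le> card (z ` {..<N})" using card_image[OF inj] by simp
    show "degree (hermite N) \<le> N" using hermite_degree_coeff by simp
    show "degree (smult (2 ^ N) W) \<le> N" using degW by simp
    fix x assume "x \<in> z ` {..<N}"
    then obtain l where l: "l < N" "x = z l" by auto
    have "poly W x = 0" unfolding W_def poly_prod using l by (intro prod_zero) auto
    then show "poly (hermite N) x = poly (smult (2 ^ N) W) x" using roots l by simp
  qed
  define R where "R = {..<N} - {i}"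
  define g where "g = (\<Prod>l\<in>R. [:- z l, 1:])"
  have Wg: "W = [:- z i, 1:] * g"
    unfolding W_def g_def R_def using i by (subst prod.remove[of _ i]) auto
  have g0: "poly g (z i) \<noteq> 0"
    unfolding g_def poly_prod R_def using inj i
    by (subst prod_zero_iff) (auto simp: inj_on_def)
  have dg: "poly (pderiv g) (z i) = (\<Sum>l\<in>R. poly g (z i) / (z i - z l))"
  proof -
    have "poly (pderiv g) (z i) = (\<Sum>l\<in>R. \<Prod>m\<in>R - {l}. (z i - z m))"
      unfolding g_def pderiv_prod poly_sum by (simp add: pderiv_pCons poly_prod)
    also have "\<dots> = (\<Sum>l\<in>R. poly g (z i) / (z i - z l))"
    proof (rule sum.cong)
      fix l assume l: "l \<in> R"
      have ne: "z i - z l \<noteq> 0" using l inj i unfolding R_def inj_on_def by auto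
      have "poly g (z i) = (z i - z l) * (\<Prod>m\<in>R - {l}. (z i - z m))"
        unfolding g_def poly_prod using l by (subst prod.remove[of _ l]) (auto simp: R_def)
      then show "(\<Prod>m\<in>R - {l}. (z i - z m)) = poly g (z i) / (z i - z l)"
        using ne by (simp add: field_simps)
    qed simp
    finally show ?thesis .
  qed
  have ode: "poly (pderiv (pderiv (hermite N)) - [:0,2:] * pderiv (hermite N) + smult (2 * real N) (hermite N)) (z i) = 0"
    using hermite_ode by simp
  have H1: "pderiv (hermite N) = smult (2 ^ N) (g + [:- z i, 1:] * pderiv g)"
    unfolding HW Wg pderiv_smult pderiv_mult by (simp add: pderiv_pCons algebra_simps)
  have H2: "pderiv (pderiv (hermite N)) = smult (2 ^ N) (smult 2 (pderiv g) + [:- z i, 1:] * pderiv (pderiv g))"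
    unfolding H1 pderiv_smult pderiv_add pderiv_mult by (intro poly_ext) (simp add: pderiv_pCons algebra_simps)
  have "2 ^ N * (2 * poly (pderiv g) (z i)) - 2 * z i * (2 ^ N * poly g (z i)) = 0"
  proof -
    have p1: "poly (pderiv (hermite N)) (z i) = 2^N * poly g (z i)" by (simp add: H1)
    have p2: "poly (pderiv (pderiv (hermite N))) (z i) = 2^N * (2 * poly (pderiv g) (z i))" by (simp add: H2)
    have p0: "poly (hermite N) (z i) = 0" using roots i by simp
    show ?thesis using ode unfolding poly_add poly_diff poly_mult poly_smult p0 p1 p2 by simp
  qed
  then have "poly (pderiv g) (z i) = z i * poly g (z i)" by (simp add: algebra_simps)
  then have "(\<Sum>l\<in>R. poly g (z i) / (z i - z l)) = z i * poly g (z i)" using dg by simp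
  then have "poly g (z i) * (\<Sum>l\<in>R. 1 / (z i - z l)) = z i * poly g (z i)"
    by (simp add: sum_distrib_left)
  then show ?thesis using g0 unfolding R_def by simp
qed


definition Qf :: "nat \<Rightarrow> real \<Rightarrow> real \<Rightarrow> real" where
  "Qf k x y = (\<Sum>m<k-1. real (m+1) * x^m * y^(k-2-m))"

lemma Qf_rec: "Qf (Suc k) x y = y * Qf k x y + real k * x^(k-1)"
proof (cases k)
  case 0 then show ?thesis by (simp add: Qf_def)
next
  case (Suc j)
  have "Qf (Suc k) x y = (\<Sum>m<j. real (m+1) * x^m * y^(j-m)) + real (j+1) * x^j"
    unfolding Qf_def Suc by simp
  also have "(\<Sum>m<j. real (m+1) * x^m * y^(j-m)) = y * Qf k x y"
    unfolding Qf_def Suc sum_distrib_left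
  proof (rule sum.cong)
    fix m assume "m \<in> {..<Suc j - 1}"
    then have "j - m = Suc (Suc j - 2 - m)" by auto
    then show "real (m+1) * x^m * y^(j-m) = y * (real (m+1) * x^m * y^(Suc j - 2 - m))"
      by simp
  qed simp
  finally show ?thesis using Suc by simp
qed

lemma pow_id: "x^k - y^k = real k * x^(k-1) * (x-y) - (x-y)^2 * Qf k x y"
proof (induction k)
  case 0 then show ?case by (simp add: Qf_def)
next
  case (Suc k)
  show ?case
  proof (cases k)
    case 0 then show ?thesis by (simp add: Qf_def)
  next
    case (Suc j)
    define a where "a = x^(k-1)"
    define q where "q = Qf k x y"
    have xk: "x^k = x * a" using Suc unfolding a_def by simp
    have hq: "(x-y)^2 * q = real k * a * (x-y) - x * a + y^k"
      using Suc.IH xk unfolding a_def q_def by simp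
    have e: "(x-y)^2 * (y * q + real k * a) = y * ((x-y)^2 * q) + (x-y)^2 * real k * a"
      by (simp add: algebra_simps)
    have "real (Suc k) * x ^ (Suc k - 1) * (x - y) - (x - y)^2 * Qf (Suc k) x y
       = real (Suc k) * (x * a) * (x - y) - (y * (real k * a * (x-y) - x * a + y^k) + (x-y)^2 * real k * a)"
      unfolding Qf_rec e[unfolded q_def a_def] hq[unfolded q_def a_def] using xk unfolding a_def by simp
    also have "\<dots> = x^Suc k - y^Suc k" using xk by (simp add: power2_eq_square algebra_simps)
    finally show ?thesis by simp
  qed
qed

lemma frac_id: "x \<noteq> y \<Longrightarrow> (x^k - y^k) / (x-y)^2 = real k * x^(k-1) * (1/(x-y)) - Qf k x y"
  by (subst pow_id) (simp add: diff_divide_distrib power2_eq_square)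

lemma Qf_diag: "Qf k x x = (\<Sum>j<k-1. real (j+1)) * x^(k-2)"
  unfolding Qf_def sum_distrib_right
proof (rule sum.cong)
  fix m assume "m \<in> {..<k-1}"
  then have "x^m * x^(k-2-m) = x^(k-2)" by (simp flip: power_add)
  then show "real (m+1) * x^m * x^(k-2-m) = real (m+1) * x^(k-2)" by (simp add: mult.assoc)
qed simp

lemma prod_fact: "prod_list (map (\<lambda>i. real i + 1) [0..<N]) = fact N"
  by (induction N) (auto simp: algebra_simps)


lemma vandermonde_det_nz:
  fixes z :: "nat \<Rightarrow> real"
  assumes inj: "inj_on z {..<N}"
  shows "det (mat N N (\<lambda>(i,k). z i ^ k)) \<noteq> 0"
proof
  let ?V = "mat N N (\<lambda>(i,k). z i ^ k)"
  assume "det ?V = 0"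
  then obtain v where v: "v \<in> carrier_vec N" "v \<noteq> 0\<^sub>v N" "?V *\<^sub>v v = 0\<^sub>v N"
    using det_0_iff_vec_prod_zero[of ?V N] by auto
  define p where "p = (\<Sum>k<N. monom (v$k) k)"
  have N0: "N > 0" proof (rule ccontr)
    assume "\<not> N > 0"
    then have "v = 0\<^sub>v N" using v(1) by (intro eq_vecI) auto
    then show False using v(2) by simp
  qed
  have "degree p \<le> N - 1"
    by (rule degree_le) (auto simp: p_def coeff_sum coeff_monom)
  then have deg: "degree p < N" using N0 by simp
  have roots: "poly p (z i) = 0" if "i < N" for i
  proof -
    have "(?V *\<^sub>v v) $ i = 0" using v that by simp
    moreover have "(?V *\<^sub>v v) $ i = (\<Sum>k<N. z i ^ k * v $ k)"
      using v(1) that by (simp add: scalar_prod_def atLeast0LessThan)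
    moreover have "poly p (z i) = (\<Sum>k<N. z i ^ k * v $ k)"
      unfolding p_def poly_sum poly_monom by (simp add: mult.commute)
    ultimately show ?thesis by simp
  qed
  have "p = 0"
  proof (rule poly_eqI_degree[where A = "z ` {..<N}"])
    show "card (z ` {..<N}) > degree p" using card_image[OF inj] deg by simp
    show "card (z ` {..<N}) > degree (0::real poly)" using card_image[OF inj] N0 by simp
  qed (use roots in auto)
  then have "v = 0\<^sub>v N"
  proof -
    assume p0: "p = 0"
    show ?thesis
    proof (rule eq_vecI)
      fix k assume k: "k < dim_vec (0\<^sub>v N :: real vec)"
      have "coeff p k = v $ k" unfolding p_def coeff_sum coeff_monom using k by simp
      then show "v $ k = 0\<^sub>v N $ k" using p0 k by simp
    qed (use v in auto)
  qed
  then show False using v by simp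
qed


theorem corollary2p3:
  fixes N :: nat and z :: "nat \<Rightarrow> real"
  assumes roots: "\<forall>i<N. poly (hermite N) (z i) = 0"
    and decr: "\<forall>i j. i < j \<and> j < N \<longrightarrow> z j < z i"
  shows "det (hermite_S N z) = fact N"
proof -
  have inj: "inj_on z {..<N}"
  proof (rule inj_onI)
    fix a b assume "a \<in> {..<N}" "b \<in> {..<N}" "z a = z b"
    then show "a = b" using decr by (metis lessThan_iff linorder_neqE_nat order_less_irrefl)
  qed
  define S where "S = hermite_S N z"
  define V where "V = mat N N (\<lambda>(i,k). z i ^ k)"
  define P where "P d = (\<Sum>l<N. z l ^ d)" for d
  define c where "c k = (\<Sum>j<k-1. real (j+1))" for k
  define T where "T = mat N N (\<lambda>(m,k). (if m = k then real k + 1 else 0)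
      + (if m + 2 = k then c k else 0) - (if m + 2 \<le> k then real (m+1) * P (k-2-m) else 0))"
  have SC: "S \<in> carrier_mat N N" "V \<in> carrier_mat N N" "T \<in> carrier_mat N N"
    unfolding S_def V_def T_def hermite_S_def by auto
  have SV: "S * V = V * T"
  proof (rule eq_matI)
    show "dim_row (S * V) = dim_row (V * T)" "dim_col (S * V) = dim_col (V * T)" using SC by auto
    fix i k assume ik: "i < dim_row (V * T)" "k < dim_col (V * T)"
    then have i: "i < N" and k: "k < N" using SC by auto
    define R where "R = {..<N} - {i}"
    have neq: "z i \<noteq> z l" if "l \<in> R" for l using that inj i unfolding R_def inj_on_def by auto
    have "(S * V) $$ (i,k) = (\<Sum>j<N. S $$ (i,j) * z j ^ k)"
      using i k SC by (simp add: scalar_prod_def atLeast0LessThan V_def)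
    also have "\<dots> = S $$ (i,i) * z i ^ k + (\<Sum>j\<in>R. S $$ (i,j) * z j ^ k)"
      unfolding R_def using i by (subst sum.remove[of _ i]) auto
    also have "\<dots> = z i ^ k + (\<Sum>l\<in>R. (z i ^ k - z l ^ k) / (z i - z l)^2)"
    proof -
      have "S $$ (i,i) = 1 + (\<Sum>l\<in>R. 1 / (z i - z l)^2)"
        using i unfolding S_def hermite_S_def R_def by simp
      moreover have "(\<Sum>j\<in>R. S $$ (i,j) * z j ^ k) = (\<Sum>j\<in>R. - (z j ^ k / (z i - z j)^2))"
        by (rule sum.cong) (auto simp: S_def hermite_S_def R_def i)
      ultimately show ?thesis
        by (simp add: algebra_simps sum_distrib_left diff_divide_distrib sum_subtractf sum_negf)
    qed
    also have "\<dots> = z i ^ k + (\<Sum>l\<in>R. real k * z i ^ (k-1) * (1 / (z i - z l)) - Qf k (z i) (z l))"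
      by (simp add: frac_id neq)
    also have "\<dots> = z i ^ k + real k * z i ^ (k-1) * z i - (\<Sum>l\<in>R. Qf k (z i) (z l))"
    proof -
      have "(\<Sum>l\<in>R. real k * z i ^ (k-1) * (1 / (z i - z l))) = real k * z i ^ (k-1) * z i"
        using key_sum[OF roots decr i] unfolding R_def by (simp only: sum_distrib_left[symmetric])
      then show ?thesis by (simp add: sum_subtractf)
    qed
    also have "real k * z i ^ (k-1) * z i = real k * z i ^ k"
      by (cases k) (auto simp: algebra_simps)
    also have "(\<Sum>l\<in>R. Qf k (z i) (z l)) = (\<Sum>l<N. Qf k (z i) (z l)) - c k * z i ^ (k-2)"
      unfolding R_def using i by (subst sum.remove[of "{..<N}" i]) (auto simp: Qf_diag c_def)
    also have "(\<Sum>l<N. Qf k (z i) (z l)) = (\<Sum>m<k-1. z i ^ m * (real (m+1) * P (k-2-m)))"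
      unfolding Qf_def P_def by (subst sum.swap) (simp add: sum_distrib_left algebra_simps)
    finally have lhs: "(S * V) $$ (i,k) = z i ^ k + real k * z i ^ k
        - ((\<Sum>m<k-1. z i ^ m * (real (m+1) * P (k-2-m))) - c k * z i ^ (k-2))" .
    have "(V * T) $$ (i,k) = (\<Sum>m<N. z i ^ m * T $$ (m,k))"
      using i k SC by (simp add: scalar_prod_def atLeast0LessThan V_def)
    also have "\<dots> = (\<Sum>m<N. z i ^ m * (if m = k then real k + 1 else 0))
       + (\<Sum>m<N. z i ^ m * (if m + 2 = k then c k else 0))
       - (\<Sum>m<N. z i ^ m * (if m + 2 \<le> k then real (m+1) * P (k-2-m) else 0))"
      unfolding sum_subtractf[symmetric] sum.distrib[symmetric]
      by (rule sum.cong) (simp_all add: T_def k algebra_simps)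
    also have "(\<Sum>m<N. z i ^ m * (if m = k then real k + 1 else 0)) = z i ^ k * (real k + 1)"
      using k by (simp add: if_distrib cong: if_cong)
    also have "(\<Sum>m<N. z i ^ m * (if m + 2 = k then c k else 0)) = c k * z i ^ (k-2)"
    proof (cases "k \<ge> 2")
      case True
      have "(\<Sum>m<N. z i ^ m * (if m + 2 = k then c k else 0)) = (\<Sum>m<N. if m = k - 2 then z i ^ (k-2) * c k else 0)"
        by (rule sum.cong) (use True in auto)
      then show ?thesis using k by simp
    next
      case False
      then have "c k = 0" unfolding c_def by simp
      then show ?thesis by (simp add: if_distrib cong: if_cong)
    qed
    also have "(\<Sum>m<N. z i ^ m * (if m + 2 \<le> k then real (m+1) * P (k-2-m) else 0))
        = (\<Sum>m<k-1. z i ^ m * (real (m+1) * P (k-2-m)))"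
    proof -
      have "(\<Sum>m<N. z i ^ m * (if m + 2 \<le> k then real (m+1) * P (k-2-m) else 0))
          = (\<Sum>m<N. if m < k - 1 then z i ^ m * (real (m+1) * P (k-2-m)) else 0)"
        by (rule sum.cong) auto
      also have "\<dots> = (\<Sum>m\<in>{m\<in>{..<N}. m < k - 1}. z i ^ m * (real (m+1) * P (k-2-m)))"
        by (rule sum.inter_filter[symmetric]) simp
      also have "{m\<in>{..<N}. m < k - 1} = {..<k-1}" using k by auto
      finally show ?thesis .
    qed
    finally have rhs: "(V * T) $$ (i,k) = z i ^ k * (real k + 1) + c k * z i ^ (k-2)
        - (\<Sum>m<k-1. z i ^ m * (real (m+1) * P (k-2-m)))" .
    show "(S * V) $$ (i,k) = (V * T) $$ (i,k)" unfolding lhs rhs by (simp add: algebra_simps)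
  qed
  have "det S * det V = det V * det T"
    using det_mult[OF SC(1) SC(2)] det_mult[OF SC(2) SC(3)] SV by (simp only: mult.commute)
  moreover have "det V \<noteq> 0" unfolding V_def by (rule vandermonde_det_nz[OF inj])
  ultimately have "det S = det T" by simp
  also have "det T = prod_list (diag_mat T)"
    by (rule det_upper_triangular[OF _ SC(3)]) (auto simp: upper_triangular_def T_def)
  also have "diag_mat T = map (\<lambda>i. real i + 1) [0..<N]"
    unfolding diag_mat_def T_def by simp
  finally show ?thesis unfolding S_def using prod_fact by simp
qed

end
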